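(* There is no deterministic parallel-work-oblivious scheduler for the serial-parallel scheduling problem on $p$ processors that achieves awake-time competitive ratio better than $2-\Omega(1/p)$, even in the single-arrival-time setting in which all tasks arrive at time $0$: there is an absolute constant $C$ such that for every such scheduler there is a task arrival process with all arrival times equal to $0$ on which its awake time is at least $(2-C/p)$ times the optimal offline awake time.
   Context: Serial-parallel scheduling problem: $p$ identical processors. A task arrival process is a finite set of tasks $\tau_i=(\sigma_i,\pi_i,t_i)$ with arrival time $t_i\ge0$, serial work $\sigma_i$ and parallel work $\pi_i$, $1\le\pi_i/\sigma_i\le p$. A task is performed either by its serial job (work $\sigma_i$, at most one processor at any instant) or by its parallel job (work $\pi_i$, any number of processors, rate equal to number of processors); time is continuous, allocations may be fractional, preemption is allowed, and the implementation choice is irrevocable once the task is started. A task is alive from arrival until completion; awake time is the measure of the set of times at which some task is alive. The optimal offline schedule knows everything in advance. A parallel-work-oblivious scheduler learns, for each task, its arrival time and serial work $\sigma_i$ but never its parallel work $\pi_i$ (it only observes when a running parallel job completes). *)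

theory Defs
  imports "HOL-Analysis.Analysis"
begin

text \<open>A task is a triple (sigma, pi, t): serial work, parallel work, arrival time.
  A task arrival process is a finite list of tasks; the task identity is its index.\<close>

type_synonym task = "real \<times> real \<times> real"

definition ser_work :: "task \<Rightarrow> real" where "ser_work tau = fst tau"
definition par_work :: "task \<Rightarrow> real" where "par_work tau = fst (snd tau)"
definition arrival :: "task \<Rightarrow> real" where "arrival tau = snd (snd tau)"

definition valid_instance :: "nat \<Rightarrow> task list \<Rightarrow> bool" where
  "valid_instance p I \<longleftrightarrow>
     (\<forall>tau\<in>set I. 0 < ser_work tau \<and> 1 \<le> par_work tau / ser_work tau
        \<and> par_work tau / ser_work tau \<le> real p \<and> 0 \<le> arrival tau)"

text \<open>A schedule: for each task the implementation choice (True = parallel job,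
  False = serial job) and the (fractional) number of processors allocated to the task
  at each instant of continuous time.\<close>

record schedule =
  choice :: "nat \<Rightarrow> bool"
  alloc :: "nat \<Rightarrow> real \<Rightarrow> real"

definition work_of :: "task list \<Rightarrow> schedule \<Rightarrow> nat \<Rightarrow> real" where
  "work_of I S i = (if choice S i then par_work (I ! i) else ser_work (I ! i))"

definition done_by :: "schedule \<Rightarrow> nat \<Rightarrow> real \<Rightarrow> real" where
  "done_by S i t = integral {0..t} (alloc S i)"

definition completion :: "task list \<Rightarrow> schedule \<Rightarrow> nat \<Rightarrow> real" where
  "completion I S i = Inf {t. arrival (I ! i) \<le> t \<and> work_of I S i \<le> done_by S i t}"

definition feasible :: "nat \<Rightarrow> task list \<Rightarrow> schedule \<Rightarrow> bool" where
  "feasible p I S \<longleftrightarrow>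
     (\<forall>i<length I. \<forall>t. 0 \<le> alloc S i t) \<and>
     (\<forall>i<length I. \<forall>t. t < arrival (I ! i) \<longrightarrow> alloc S i t = 0) \<and>
     (\<forall>i<length I. \<not> choice S i \<longrightarrow> (\<forall>t. alloc S i t \<le> 1)) \<and>
     (\<forall>t. (\<Sum>i<length I. alloc S i t) \<le> real p) \<and>
     (\<forall>i<length I. \<forall>t. alloc S i integrable_on {0..t}) \<and>
     (\<forall>i<length I. \<exists>t. work_of I S i \<le> done_by S i t)"

definition awake_time :: "task list \<Rightarrow> schedule \<Rightarrow> real" where
  "awake_time I S = measure lborel (\<Union>i<length I. {arrival (I ! i) ..< completion I S i})"

definition opt_awake :: "nat \<Rightarrow> task list \<Rightarrow> real" where
  "opt_awake p I = Inf {awake_time I S | S. feasible p I S}"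

definition arrived :: "task list \<Rightarrow> real \<Rightarrow> nat \<Rightarrow> bool" where
  "arrived I t i \<longleftrightarrow> i < length I \<and> arrival (I ! i) \<le> t"

definition par_done :: "task list \<Rightarrow> schedule \<Rightarrow> nat \<Rightarrow> real \<Rightarrow> bool" where
  "par_done I S i u \<longleftrightarrow> choice S i \<and> completion I S i \<le> u"

text \<open>Everything the scheduler can have observed up to time t agrees on I and I':
  the tasks that have arrived, their arrival times and serial works, and the times of
  completion of the parallel jobs it runs.\<close>
definition same_history :: "(task list \<Rightarrow> schedule) \<Rightarrow> task list \<Rightarrow> task list \<Rightarrow> real \<Rightarrow> bool" where
  "same_history A I I' t \<longleftrightarrow>
     (\<forall>i. arrived I t i \<longleftrightarrow> arrived I' t i) \<and>
     (\<forall>i. arrived I t i \<longrightarrow>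
        ser_work (I ! i) = ser_work (I' ! i) \<and> arrival (I ! i) = arrival (I' ! i) \<and>
        (\<forall>u\<le>t. par_done I (A I) i u \<longleftrightarrow> par_done I' (A I') i u))"

text \<open>A deterministic scheduler maps each task arrival process to a feasible schedule;
  it is parallel-work-oblivious (and online) if its actions up to time t are determined
  by its history up to time t; the implementation choice of a task that has already
  received processing is fixed (irrevocable).\<close>
definition oblivious_scheduler :: "nat \<Rightarrow> (task list \<Rightarrow> schedule) \<Rightarrow> bool" where
  "oblivious_scheduler p A \<longleftrightarrow>
     (\<forall>I. valid_instance p I \<longrightarrow> feasible p I (A I)) \<and>
     (\<forall>I I' t. valid_instance p I \<longrightarrow> valid_instance p I' \<longrightarrow> same_history A I I' t \<longrightarrow>
        (\<forall>i. arrived I t i \<longrightarrow>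
           (\<forall>u\<le>t. alloc (A I) i u = alloc (A I') i u) \<and>
           (0 < done_by (A I) i t \<longrightarrow> choice (A I) i = choice (A I') i)))"

end

theory Submission
  imports Defs
begin

lemma alloc_le_p:
  assumes "feasible p I S" "i < length I"
  shows "alloc S i t \<le> real p"
proof -
  have "alloc S i t \<le> (\<Sum>j<length I. alloc S j t)"
    by (rule member_le_sum) (use assms in \<open>auto simp: feasible_def\<close>)
  also have "\<dots> \<le> real p" using assms by (auto simp: feasible_def)
  finally show ?thesis .
qed

lemma done_le0: "t \<le> 0 \<Longrightarrow> done_by S i t = 0"
proof (cases "t < 0")
  case True then show ?thesis by (simp add: done_by_def)
next
  case False
  assume "t \<le> 0" with False have "t = 0" by simp
  then show ?thesis by (simp add: done_by_def)
qed

lemma done_nonneg: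
  assumes "feasible p I S" "i < length I"
  shows "0 \<le> done_by S i t"
  unfolding done_by_def
  by (rule integral_nonneg) (use assms in \<open>auto simp: feasible_def\<close>)

lemma done_lip:
  assumes "feasible p I S" "i < length I" "0 \<le> t1" "t1 \<le> t2" "\<And>u. alloc S i u \<le> M"
  shows "done_by S i t2 \<le> done_by S i t1 + M * (t2 - t1)" "done_by S i t1 \<le> done_by S i t2"
proof -
  have int: "alloc S i integrable_on {0..t2}" using assms by (auto simp: feasible_def)
  have sub: "alloc S i integrable_on {t1..t2}"
    by (rule integrable_subinterval_real[OF int]) (use assms in auto)
  have comb: "done_by S i t1 + integral {t1..t2} (alloc S i) = done_by S i t2"
    unfolding done_by_def
    by (rule Henstock_Kurzweil_Integration.integral_combine) (use assms int in auto)
  have "integral {t1..t2} (alloc S i) \<le> integral {t1..t2} (\<lambda>_. M)"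
    by (rule integral_le[OF sub]) (use assms in auto)
  also have "\<dots> = M * (t2 - t1)" using assms by simp
  finally show "done_by S i t2 \<le> done_by S i t1 + M * (t2 - t1)" using comb by linarith
  have "0 \<le> integral {t1..t2} (alloc S i)"
    by (rule integral_nonneg[OF sub]) (use assms in \<open>auto simp: feasible_def\<close>)
  then show "done_by S i t1 \<le> done_by S i t2" using comb by linarith
qed

lemma done_mono:
  assumes "feasible p I S" "i < length I" "t1 \<le> t2"
  shows "done_by S i t1 \<le> done_by S i t2"
proof (cases "t1 \<le> 0")
  case True then show ?thesis using done_le0 done_nonneg[OF assms(1,2)] by simp
next
  case False then show ?thesis
    using done_lip(2)[OF assms(1,2) _ assms(3) alloc_le_p[OF assms(1,2)]] by simp
qed

lemma done_lipp:
  assumes "feasible p I S" "i < length I" "0 \<le> t1" "t1 \<le> t2"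
  shows "done_by S i t2 \<le> done_by S i t1 + real p * (t2 - t1)"
  using done_lip(1)[OF assms alloc_le_p[OF assms(1,2)]] .

lemma done_le_pt:
  assumes "feasible p I S" "i < length I" "0 \<le> t"
  shows "done_by S i t \<le> real p * t"
  using done_lipp[OF assms(1,2) order_refl assms(3)] done_le0[of 0] by simp

lemma done_cong:
  assumes "\<forall>u\<le>t1. alloc S i u = alloc S' i u" "t \<le> t1"
  shows "done_by S i t = done_by S' i t"
  unfolding done_by_def by (rule integral_cong) (use assms in auto)

lemma work_pos:
  assumes "valid_instance p I" "i < length I"
  shows "0 < work_of I S i"
proof -
  have "I ! i \<in> set I" using assms by simp
  then have h: "0 < ser_work (I!i) \<and> 1 \<le> par_work (I!i) / ser_work (I!i)"
    using assms unfolding valid_instance_def by blast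
  then have "ser_work (I!i) \<le> par_work (I!i)" using le_divide_eq_1_pos by blast
  have "0 < ser_work (I!i)" using h by blast
  then show ?thesis using \<open>0 < ser_work (I!i)\<close> \<open>ser_work (I!i) \<le> par_work (I!i)\<close>
    by (auto simp: work_of_def)
qed

lemma completion_props:
  assumes F: "feasible p I S" and i: "i < length I" and arr: "arrival (I!i) = 0"
    and V: "valid_instance p I"
  shows "0 \<le> completion I S i"
    and "work_of I S i \<le> done_by S i (completion I S i)"
    and "\<And>t. 0 \<le> t \<Longrightarrow> work_of I S i \<le> done_by S i t \<Longrightarrow> completion I S i \<le> t"
    and "\<And>u. completion I S i \<le> u \<Longrightarrow> work_of I S i \<le> done_by S i u"
proof -
  define X where "X = {t. 0 \<le> t \<and> work_of I S i \<le> done_by S i t}"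
  have c: "completion I S i = Inf X" unfolding X_def completion_def arr ..
  have wp: "0 < work_of I S i" by (rule work_pos[OF V i])
  obtain t where t: "work_of I S i \<le> done_by S i t" using F i by (auto simp: feasible_def)
  have "0 \<le> t"
  proof (rule ccontr)
    assume "\<not> 0 \<le> t" then have "done_by S i t = 0" by (intro done_le0) simp
    with t wp show False by simp
  qed
  with t have ne: "X \<noteq> {}" unfolding X_def by auto
  have bdd: "bdd_below X" unfolding X_def by (rule bdd_belowI[of _ 0]) auto
  show c0: "0 \<le> completion I S i" unfolding c by (rule cInf_greatest[OF ne]) (auto simp: X_def)
  show "\<And>t. 0 \<le> t \<Longrightarrow> work_of I S i \<le> done_by S i t \<Longrightarrow> completion I S i \<le> t"
    unfolding c by (rule cInf_lower[OF _ bdd]) (auto simp: X_def)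
  have pp: "0 < real p"
  proof -
    have "work_of I S i \<le> real p * t" using t done_le_pt[OF F i \<open>0 \<le> t\<close>] by simp
    with wp \<open>0 \<le> t\<close> show ?thesis by (cases "p = 0") auto
  qed
  show wc: "work_of I S i \<le> done_by S i (completion I S i)"
  proof (rule field_le_epsilon)
    fix e :: real assume e: "0 < e"
    have "Inf X < Inf X + e / real p" using e pp by simp
    then obtain x where x0: "x \<in> X" "x < Inf X + e / real p"
      using cInf_less_iff[OF ne bdd] by blast
    then have x: "x \<in> X" "x < completion I S i + e / real p" using c by auto
    have cx: "completion I S i \<le> x" unfolding c by (rule cInf_lower[OF x(1) bdd])
    have "done_by S i x \<le> done_by S i (completion I S i) + real p * (x - completion I S i)"
      by (rule done_lipp[OF F i c0 cx])
    moreover have "real p * (x - completion I S i) \<le> e"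
      using x(2) pp by (simp add: field_simps)
    ultimately show "work_of I S i \<le> done_by S i (completion I S i) + e"
      using x(1) unfolding X_def by auto
  qed
  show "\<And>u. completion I S i \<le> u \<Longrightarrow> work_of I S i \<le> done_by S i u"
    using wc done_mono[OF F i] by (meson order_trans)
qed

definition mk :: "real \<Rightarrow> real \<Rightarrow> task list" where
  "mk x y = [(1, x, 0), (1, y, 0)]"

lemma mk_simps:
  "length (mk x y) = 2" "mk x y \<noteq> []"
  "i < 2 \<Longrightarrow> ser_work (mk x y ! i) = 1"
  "i < 2 \<Longrightarrow> arrival (mk x y ! i) = 0"
  "par_work (mk x y ! 0) = x" "par_work (mk x y ! 1) = y" "par_work (mk x y ! Suc 0) = y"
  by (auto simp: mk_def ser_work_def arrival_def par_work_def less_2_cases_iff)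

lemma mk_arr: "\<forall>tau\<in>set (mk x y). arrival tau = 0"
  by (simp add: mk_def arrival_def)

lemma mk_valid:
  assumes "1 \<le> x" "x \<le> real p" "1 \<le> y" "y \<le> real p"
  shows "valid_instance p (mk x y)"
  using assms by (simp add: mk_def valid_instance_def ser_work_def par_work_def arrival_def)

lemma agree:
  assumes A: "oblivious_scheduler p A"
    and V: "valid_instance p (mk x y)" "valid_instance p (mk x' y')"
    and t: "0 \<le> t"
    and H: "\<forall>i<2. \<forall>u\<le>t. \<not> par_done (mk x y) (A (mk x y)) i u \<and> \<not> par_done (mk x' y') (A (mk x' y')) i u"
    and i: "i < 2"
  shows "\<forall>u\<le>t. alloc (A (mk x y)) i u = alloc (A (mk x' y')) i u"
    "0 < done_by (A (mk x y)) i t \<Longrightarrow> choice (A (mk x y)) i = choice (A (mk x' y')) i"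
proof -
  have arr: "\<And>j. arrived (mk x y) t j \<longleftrightarrow> j < 2" "\<And>j. arrived (mk x' y') t j \<longleftrightarrow> j < 2"
    using t by (auto simp: arrived_def mk_simps)
  have "same_history A (mk x y) (mk x' y') t"
    unfolding same_history_def arr using H by (auto simp: mk_simps)
  then have "\<forall>i. arrived (mk x y) t i \<longrightarrow>
           (\<forall>u\<le>t. alloc (A (mk x y)) i u = alloc (A (mk x' y')) i u) \<and>
           (0 < done_by (A (mk x y)) i t \<longrightarrow> choice (A (mk x y)) i = choice (A (mk x' y')) i)"
    using A V unfolding oblivious_scheduler_def by blast
  then show "\<forall>u\<le>t. alloc (A (mk x y)) i u = alloc (A (mk x' y')) i u"
    "0 < done_by (A (mk x y)) i t \<Longrightarrow> choice (A (mk x y)) i = choice (A (mk x' y')) i"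
    using i arr by auto
qed

lemma feas:
  assumes "oblivious_scheduler p A" "valid_instance p I"
  shows "feasible p I (A I)"
  using assms by (simp add: oblivious_scheduler_def)

lemma event_transfer:
  assumes A: "oblivious_scheduler p A"
    and V: "valid_instance p (mk x y)" "valid_instance p (mk x' y')"
    and j: "j < 2" and ch: "choice (A (mk x' y')) j"
    and H: "\<forall>t. 0 \<le> t \<longrightarrow> t < completion (mk x' y') (A (mk x' y')) j \<longrightarrow>
       (\<forall>i<2. \<forall>u\<le>t. \<not> par_done (mk x y) (A (mk x y)) i u \<and> \<not> par_done (mk x' y') (A (mk x' y')) i u)"
  shows "choice (A (mk x y)) j"
    "par_work (mk x' y' ! j) \<le> done_by (A (mk x y)) j (completion (mk x' y') (A (mk x' y')) j)"
proof -
  define I where "I = mk x y"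
  define I' where "I' = mk x' y'"
  define c where "c = completion I' (A I') j"
  have F: "feasible p I (A I)" "feasible p I' (A I')" using feas[OF A] V by (auto simp: I_def I'_def)
  have jl: "j < length I" "j < length I'" using j by (auto simp: I_def I'_def mk_simps)
  have ar: "arrival (I'!j) = 0" using j by (simp add: I'_def mk_simps)
  have V': "valid_instance p I'" "valid_instance p I" using V by (auto simp: I_def I'_def)
  note cp = completion_props[OF F(2) jl(2) ar V'(1), folded c_def]
  have w: "work_of I' (A I') j = par_work (I'!j)" using ch by (simp add: work_of_def I'_def)
  have wp: "0 < par_work (I'!j)" using work_pos[OF V'(1) jl(2), of "A I'"] w by simp
  have c0: "0 < c"
  proof (rule ccontr)
    assume "\<not> 0 < c" then have "c = 0" using cp(1) by simp
    then have "done_by (A I') j c = 0" by (simp add: done_le0)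
    with cp(2) wp w show False by simp
  qed
  have pp: "0 < real p"
  proof -
    have "par_work (I'!j) \<le> real p * c" using cp(2) w done_le_pt[OF F(2) jl(2) cp(1)] by simp
    with wp c0 show ?thesis by (cases "p = 0") auto
  qed
  have key: "par_work (I'!j) \<le> done_by (A I) j (max 0 (c - e / real p)) + e" if e: "0 < e" for e
  proof -
    define t where "t = max 0 (c - e / real p)"
    have t0: "0 \<le> t" "t < c" "t \<le> c" using c0 e pp by (auto simp: t_def)
    have al: "\<forall>u\<le>t. alloc (A I) j u = alloc (A I') j u"
      using agree(1)[OF A V t0(1) _ j] H t0 unfolding I_def I'_def c_def by blast
    have eq: "done_by (A I) j t = done_by (A I') j t" by (rule done_cong[OF al order_refl])
    have "done_by (A I') j c \<le> done_by (A I') j t + real p * (c - t)"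
      by (rule done_lipp[OF F(2) jl(2) t0(1) t0(3)])
    moreover have "real p * (c - t) \<le> e" using e pp c0
      by (auto simp: t_def max_def field_simps split: if_splits)
    ultimately show ?thesis using cp(2) w eq unfolding t_def by simp
  qed
  have W: "par_work (I'!j) \<le> done_by (A I) j c"
  proof (rule field_le_epsilon)
    fix e :: real assume e: "0 < e"
    have "done_by (A I) j (max 0 (c - e / real p)) \<le> done_by (A I) j c"
      by (rule done_mono[OF F(1) jl(1)]) (use c0 e pp in auto)
    then show "par_work (I'!j) \<le> done_by (A I) j c + e" using key[OF e] by simp
  qed
  then show "par_work (mk x' y' ! j) \<le> done_by (A (mk x y)) j (completion (mk x' y') (A (mk x' y')) j)"
    unfolding I_def I'_def c_def .
  define e where "e = par_work (I'!j) / 2"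
  have e0: "0 < e" using wp by (simp add: e_def)
  define t where "t = max 0 (c - e / real p)"
  have "0 \<le> e / real p" using e0 pp by simp
  then have t0: "0 \<le> t" "t < c" using c0 e0 pp by (auto simp: t_def)
  have "par_work (I'!j) \<le> done_by (A I) j t + e" using key[OF e0] unfolding t_def .
  then have "0 < done_by (A I) j t" using e_def wp by linarith
  then have "choice (A I) j = choice (A I') j"
    using agree(2)[OF A V t0(1) _ j] H t0 unfolding I_def I'_def c_def by blast
  then show "choice (A (mk x y)) j" using ch by (simp add: I_def I'_def)
qed

lemma serial_late:
  assumes F: "feasible p I S" and V: "valid_instance p I" and i: "i < length I"
    and ar: "arrival (I!i) = 0" and ch: "\<not> choice S i" and sw: "ser_work (I!i) = 1"
    and s0: "0 \<le> s" and ds: "done_by S i s = 0"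
  shows "s + 1 \<le> completion I S i"
proof -
  note cp = completion_props[OF F i ar V]
  define c where "c = completion I S i"
  have w: "work_of I S i = 1" using ch sw by (simp add: work_of_def)
  have one: "1 \<le> done_by S i c" using cp(2) w by (simp add: c_def)
  have sc: "s \<le> c"
  proof (rule ccontr)
    assume "\<not> s \<le> c"
    then have "done_by S i c \<le> done_by S i s" by (intro done_mono[OF F i]) simp
    with one ds show False by simp
  qed
  have al: "\<And>u. alloc S i u \<le> 1" using F i ch by (auto simp: feasible_def)
  have "done_by S i c \<le> done_by S i s + 1 * (c - s)" by (rule done_lip(1)[OF F i s0 sc al])
  with one ds show ?thesis by (simp add: c_def)
qed

lemma awake_mk:
  assumes "0 \<le> completion (mk x y) S 0" "0 \<le> completion (mk x y) S 1"
  shows "awake_time (mk x y) S = max (completion (mk x y) S 0) (completion (mk x y) S 1)"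
proof -
  have e: "(\<Union>i<length (mk x y). {arrival (mk x y ! i)..<completion (mk x y) S i})
     = {0..<max (completion (mk x y) S 0) (completion (mk x y) S 1)}"
    by (auto simp: mk_simps lessThan_Suc numeral_2_eq_2 max_def)
  show ?thesis unfolding awake_time_def e using assms by simp
qed

lemma opt_nonneg:
  assumes "oblivious_scheduler p A" "valid_instance p I"
  shows "0 \<le> opt_awake p I"
  unfolding opt_awake_def
  by (rule cInf_greatest) (use feas[OF assms] in \<open>auto simp: awake_time_def\<close>)

lemma awake_nonneg: "0 \<le> awake_time I S"
  by (simp add: awake_time_def)

lemma opt_le:
  assumes V: "valid_instance p (mk x y)" and T: "0 < T" and k: "0 < k0" "0 < k1" "k0 + k1 \<le> real p"
    and s0: "\<not> ch0 \<Longrightarrow> k0 \<le> 1" and s1: "\<not> ch1 \<Longrightarrow> k1 \<le> 1"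
    and w0: "k0 * T = (if ch0 then x else 1)" and w1: "k1 * T = (if ch1 then y else 1)"
  shows "opt_awake p (mk x y) \<le> T"
proof -
  define kk where "kk = (\<lambda>i::nat. if i = 0 then k0 else k1)"
  define S where "S = \<lparr>choice = (\<lambda>i::nat. if i = 0 then ch0 else ch1),
      alloc = (\<lambda>i u. if u \<in> {0..T} then kk i else 0)\<rparr>"
  have kpos: "\<And>i. 0 < kk i" using k by (simp add: kk_def)
  have wk: "\<And>i. i < 2 \<Longrightarrow> work_of (mk x y) S i = kk i * T"
    using w0 w1 by (auto simp: work_of_def S_def kk_def mk_simps mk_def ser_work_def par_work_def less_2_cases_iff)
  have intg: "alloc S i integrable_on {0..t}" for i t
  proof -
    have e: "{0..T} \<inter> {0..t} = {0..min T t}" by auto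
    have "(\<lambda>_. kk i) integrable_on ({0..T} \<inter> {0..t})" unfolding e by (rule integrable_const_ivl)
    then have "(\<lambda>u. if u \<in> {0..T} then kk i else 0) integrable_on {0..t}"
      by (simp only: integrable_restrict_Int)
    then show ?thesis by (simp only: S_def schedule.simps)
  qed
  have dn: "\<And>i t. 0 \<le> t \<Longrightarrow> done_by S i t = kk i * min t T"
  proof -
    fix i t assume t: "0 \<le> (t::real)"
    have "done_by S i t = integral ({0..T} \<inter> {0..t}) (\<lambda>_. kk i)"
      unfolding done_by_def S_def schedule.simps by (rule integral_restrict_Int)
    also have "{0..T} \<inter> {0..t} = {0..min t T}" by auto
    also have "integral {0..min t T} (\<lambda>_. kk i) = kk i * min t T" using t T by simp
    finally show "done_by S i t = kk i * min t T" .
  qed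
  have sum2: "\<And>f. (\<Sum>i<length (mk x y). f i) = f 0 + (f 1 :: real)"
    by (simp add: mk_simps numeral_2_eq_2)
  have F: "feasible p (mk x y) S"
    unfolding feasible_def
  proof (intro conjI allI impI)
    fix i t show "0 \<le> alloc S i t" using kpos by (simp add: S_def less_imp_le)
  next
    fix i t assume "i < length (mk x y)" "t < arrival (mk x y ! i)"
    then show "alloc S i t = 0" by (simp add: S_def mk_simps)
  next
    fix i t assume "i < length (mk x y)" "\<not> choice S i"
    then show "alloc S i t \<le> 1" using s0 s1 by (auto simp: S_def kk_def mk_simps split: if_splits)
  next
    fix t show "(\<Sum>i<length (mk x y). alloc S i t) \<le> real p"
      unfolding sum2 using k by (simp add: S_def kk_def)
  next
    fix i t show "alloc S i integrable_on {0..t}" by (rule intg)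
  next
    fix i assume "i < length (mk x y)"
    then have "work_of (mk x y) S i \<le> done_by S i T" using wk dn[of T] T by (simp add: mk_simps)
    then show "\<exists>t. work_of (mk x y) S i \<le> done_by S i t" by blast
  qed
  have cT: "completion (mk x y) S i = T" if i: "i < 2" for i
  proof -
    have "{t. arrival (mk x y ! i) \<le> t \<and> work_of (mk x y) S i \<le> done_by S i t} = {T..}"
    proof (auto simp: mk_simps i wk)
      fix t assume "0 \<le> t" "kk i * T \<le> done_by S i t"
      then have "kk i * T \<le> kk i * min t T" using dn by simp
      then have "T \<le> min t T" using kpos[of i] by (simp add: mult_le_cancel_left_pos)
      then show "T \<le> t" by simp
    next
      fix t assume "T \<le> t" then show "0 \<le> t" using T by simp
    next
      fix t assume "T \<le> t" then show "kk i * T \<le> done_by S i t" using dn[of t] T by simp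
    qed
    then show ?thesis unfolding completion_def by simp
  qed
  have aw: "awake_time (mk x y) S = T" using awake_mk[of x y S] cT[of 0] cT[of 1] T by simp
  have "opt_awake p (mk x y) \<le> awake_time (mk x y) S"
    unfolding opt_awake_def
    by (rule cInf_lower) (use F in \<open>auto intro: bdd_belowI[of _ 0] simp: awake_time_def\<close>)
  then show ?thesis using aw by simp
qed

lemma ex_min_on:
  assumes "finite J" "J \<noteq> {}"
  shows "\<exists>j0\<in>J. \<forall>j\<in>J. (f j0 :: real) \<le> f j"
proof -
  have "Min (f ` J) \<in> f ` J" using assms by simp
  then obtain j0 where "j0 \<in> J" "f j0 = Min (f ` J)" by auto
  then show ?thesis using assms by (metis Min_le finite_imageI image_eqI)
qed

lemma two_cases: "(i::nat) < 2 \<Longrightarrow> i = 0 \<or> i = 1" by auto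

lemma pd_imp:
  "par_done I S i u \<Longrightarrow> choice S i \<and> completion I S i \<le> u"
  by (simp add: par_done_def)

lemma done_sum:
  assumes F: "feasible p (mk x y) S" and t: "0 \<le> t"
  shows "done_by S 0 t + done_by S 1 t \<le> real p * t"
proof -
  have i0: "alloc S 0 integrable_on {0..t}" "alloc S 1 integrable_on {0..t}"
    using F by (auto simp: feasible_def mk_simps)
  have s: "\<And>u. alloc S 0 u + alloc S 1 u \<le> real p"
    using F by (simp add: feasible_def mk_simps numeral_2_eq_2)
  have "done_by S 0 t + done_by S 1 t = integral {0..t} (\<lambda>u. alloc S 0 u + alloc S 1 u)"
    unfolding done_by_def by (rule integral_add[symmetric, OF i0])
  also have "\<dots> \<le> integral {0..t} (\<lambda>_. real p)"
    by (rule integral_le) (use i0 s in \<open>auto intro: integrable_add\<close>)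
  also have "\<dots> = real p * t" using t by simp
  finally show ?thesis .
qed

lemma caseSS:
  assumes A: "oblivious_scheduler p A" and p5: "5 \<le> real p"
    and n0: "\<not> choice (A (mk (real p) (real p))) 0" and n1: "\<not> choice (A (mk (real p) (real p))) 1"
  shows "(2 - 8 / real p) * opt_awake p (mk 1 1) \<le> awake_time (mk 1 1) (A (mk 1 1))"
proof -
  let ?B = "mk (real p) (real p)" and ?S = "mk 1 1"
  have VB: "valid_instance p ?B" using p5 by (intro mk_valid) auto
  have VS: "valid_instance p ?S" using p5 by (intro mk_valid) auto
  have FS: "feasible p ?S (A ?S)" by (rule feas[OF A VS])
  have nB: "\<And>i. i < 2 \<Longrightarrow> \<not> choice (A ?B) i" using n0 n1 two_cases by blast
  have allser: "\<forall>j<2. \<not> choice (A ?S) j"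
  proof (rule ccontr)
    assume neg: "\<not> (\<forall>j<2. \<not> choice (A ?S) j)"
    define J where "J = {j. j < 2 \<and> choice (A ?S) j}"
    have "finite J" "J \<noteq> {}" using neg by (auto simp: J_def)
    from ex_min_on[OF this, of "completion ?S (A ?S)"] obtain j0 where
      j0: "j0 \<in> J" "\<forall>j\<in>J. completion ?S (A ?S) j0 \<le> completion ?S (A ?S) j" by blast
    have H: "\<forall>t. 0 \<le> t \<longrightarrow> t < completion ?S (A ?S) j0 \<longrightarrow>
       (\<forall>i<2. \<forall>u\<le>t. \<not> par_done ?B (A ?B) i u \<and> \<not> par_done ?S (A ?S) i u)"
    proof (intro allI impI conjI notI)
      fix t u :: real and i :: nat assume "t < completion ?S (A ?S) j0" "i < 2" "u \<le> t" "par_done ?B (A ?B) i u"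
      then show False using nB pd_imp by blast
    next
      fix t u :: real and i :: nat assume "t < completion ?S (A ?S) j0" "i < 2" "u \<le> t" "par_done ?S (A ?S) i u"
      then show False using j0 pd_imp[of ?S "A ?S" i u] unfolding J_def by force
    qed
    have "choice (A ?B) j0" by (rule event_transfer(1)[OF A VB VS _ _ H]) (use j0 J_def in auto)
    then show False using nB j0 J_def by auto
  qed
  have c0: "1 \<le> completion ?S (A ?S) 0"
    using serial_late[OF FS VS _ _ _ _ order_refl done_le0[OF order_refl], of 0] allser
    by (simp add: mk_simps)
  have c1: "0 \<le> completion ?S (A ?S) 1"
    by (rule completion_props(1)[OF FS _ _ VS]) (auto simp: mk_simps)
  have aw: "1 \<le> awake_time ?S (A ?S)" using awake_mk[of 1 1 "A ?S"] c0 c1 by simp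
  have op: "opt_awake p ?S \<le> 2 / real p"
    by (rule opt_le[OF VS, of _ "real p / 2" "real p / 2" True True]) (use p5 in auto)
  have co: "0 \<le> 2 - 8 / real p" using p5 by (simp add: field_simps)
  have "(2 - 8 / real p) * opt_awake p ?S \<le> (2 - 8 / real p) * (2 / real p)"
    by (rule mult_left_mono[OF op co])
  also have "\<dots> \<le> 2 * (2 / real p)" by (rule mult_right_mono) (use p5 in auto)
  also have "\<dots> \<le> 1" using p5 by (simp add: field_simps)
  finally show ?thesis using aw by simp
qed

lemma casePP:
  assumes A: "oblivious_scheduler p A" and p5: "5 \<le> real p"
    and n0: "choice (A (mk (real p) (real p))) 0" and n1: "choice (A (mk (real p) (real p))) 1"
  shows "(2 - 8 / real p) * opt_awake p (mk (real p) (real p)) \<le> awake_time (mk (real p) (real p)) (A (mk (real p) (real p)))"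
proof -
  let ?B = "mk (real p) (real p)"
  have VB: "valid_instance p ?B" using p5 by (intro mk_valid) auto
  have FB: "feasible p ?B (A ?B)" by (rule feas[OF A VB])
  define c0 where "c0 = completion ?B (A ?B) 0"
  define c1 where "c1 = completion ?B (A ?B) 1"
  have cp0: "0 \<le> c0" "\<And>u. c0 \<le> u \<Longrightarrow> real p \<le> done_by (A ?B) 0 u"
    using completion_props[OF FB _ _ VB, of 0] n0 by (auto simp: mk_simps c0_def work_of_def)
  have cp1: "0 \<le> c1" "\<And>u. c1 \<le> u \<Longrightarrow> real p \<le> done_by (A ?B) 1 u"
    using completion_props[OF FB _ _ VB, of 1] n1 by (auto simp: mk_simps c1_def work_of_def)
  have mx: "0 \<le> max c0 c1" using cp0 by simp
  have "2 * real p \<le> real p * max c0 c1"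
    using cp0(2)[of "max c0 c1"] cp1(2)[of "max c0 c1"] done_sum[OF FB mx] by simp
  then have m2: "2 \<le> max c0 c1" using p5 by (simp add: mult.commute)
  have aw: "awake_time ?B (A ?B) = max c0 c1" using awake_mk[of _ _ "A ?B"] cp0 cp1 by (simp add: c0_def c1_def)
  have op: "opt_awake p ?B \<le> 1"
    by (rule opt_le[OF VB, of _ 1 1 False False]) (use p5 in auto)
  have co: "0 \<le> 2 - 8 / real p" using p5 by (simp add: field_simps)
  have "(2 - 8 / real p) * opt_awake p ?B \<le> (2 - 8 / real p) * 1"
    by (rule mult_left_mono[OF op co])
  also have "\<dots> \<le> 2" using p5 by simp
  finally show ?thesis using aw m2 by simp
qed

lemma caseMixed:
  assumes A: "oblivious_scheduler p A" and p5: "5 \<le> real p"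
    and ab: "a < 2" "b < 2" "a \<noteq> b"
    and ca: "choice (A (mk (real p) (real p))) a" and cb: "\<not> choice (A (mk (real p) (real p))) b"
  shows "\<exists>x y. 1 \<le> x \<and> x \<le> real p \<and> 1 \<le> y \<and> y \<le> real p \<and>
     (2 - 8 / real p) * opt_awake p (mk x y) \<le> awake_time (mk x y) (A (mk x y))"
proof -
  let ?B = "mk (real p) (real p)"
  have pp: "0 < real p" using p5 by simp
  have VB: "valid_instance p ?B" using p5 by (intro mk_valid) auto
  have FB: "feasible p ?B (A ?B)" by (rule feas[OF A VB])
  have al: "a < length ?B" "b < length ?B" using ab by (auto simp: mk_simps)
  have arB: "arrival (?B ! a) = 0" "arrival (?B ! b) = 0" using ab by (auto simp: mk_simps)
  have iab: "\<And>i. i < 2 \<Longrightarrow> i = a \<or> i = b" using ab by auto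
  have co: "0 \<le> 2 - 8 / real p" using p5 by (simp add: field_simps)
  define db where "db = done_by (A ?B) b"
  define da where "da = done_by (A ?B) a"
  define X where "X = {t. 0 < db t}"
  define s where "s = Inf X"
  note cpb = completion_props[OF FB al(2) arB(2) VB]
  note cpa = completion_props[OF FB al(1) arB(1) VB]
  have wa: "work_of ?B (A ?B) a = real p" using ca ab by (auto simp: work_of_def mk_def par_work_def less_2_cases_iff)
  have wb: "work_of ?B (A ?B) b = 1" using cb ab by (auto simp: work_of_def mk_simps)
  have Xpos: "\<And>t. t \<in> X \<Longrightarrow> 0 < t"
  proof (rule ccontr)
    fix t assume "t \<in> X" "\<not> 0 < t"
    then have "db t = 0" unfolding db_def by (intro done_le0) simp
    with \<open>t \<in> X\<close> show False by (simp add: X_def)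
  qed
  have "completion ?B (A ?B) b \<in> X" unfolding X_def db_def using cpb(2) wb by simp
  then have ne: "X \<noteq> {}" by blast
  have bdd: "bdd_below X" by (rule bdd_belowI[of _ 0]) (use Xpos in force)
  have s0: "0 \<le> s" unfolding s_def by (rule cInf_greatest[OF ne]) (use Xpos in force)
  have dbs: "db s = 0"
  proof -
    have "db s \<le> 0"
    proof (cases "s = 0")
      case True then show ?thesis by (simp add: db_def done_le0)
    next
      case False
      then have spos: "0 < s" using s0 by simp
      show ?thesis
      proof (rule field_le_epsilon)
        fix e :: real assume e: "0 < e"
        define u where "u = max 0 (s - e / real p)"
        have u: "0 \<le> u" "u < s" "u \<le> s" using spos e pp by (auto simp: u_def)
        have "u \<notin> X"
        proof
          assume "u \<in> X" then have "s \<le> u" unfolding s_def by (rule cInf_lower[OF _ bdd])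
          with u show False by simp
        qed
        then have "db u \<le> 0" by (simp add: X_def)
        moreover have "db s \<le> db u + real p * (s - u)"
          unfolding db_def by (rule done_lipp[OF FB al(2) u(1) u(3)])
        moreover have "real p * (s - u) \<le> e" using e pp spos
          by (auto simp: u_def max_def field_simps split: if_splits)
        ultimately show "db s \<le> 0 + e" by simp
      qed
    qed
    moreover have "0 \<le> db s" unfolding db_def by (rule done_nonneg[OF FB al(2)])
    ultimately show ?thesis by simp
  qed
  have cBa: "1 \<le> completion ?B (A ?B) a"
  proof -
    have "real p \<le> real p * completion ?B (A ?B) a"
      using cpa(2) wa done_le_pt[OF FB al(1) cpa(1)] by simp
    then show ?thesis using pp by simp
  qed
  have VBs: "valid_instance p ?B" by (rule VB)
  show ?thesis
  proof (cases "1 - 4 / real p \<le> s")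
    case True
    have "s + 1 \<le> completion ?B (A ?B) b"
      by (rule serial_late[OF FB VB al(2) arB(2) cb _ s0]) (use ab dbs in \<open>auto simp: mk_simps db_def\<close>)
    moreover have "completion ?B (A ?B) b \<le> awake_time ?B (A ?B)"
      using awake_mk[of _ _ "A ?B"] cpa(1) cpb(1) ab by (auto simp: less_2_cases_iff)
    ultimately have aw: "2 - 4 / real p \<le> awake_time ?B (A ?B)" using True by simp
    have op: "opt_awake p ?B \<le> 1"
      by (rule opt_le[OF VB, of _ 1 1 False False]) (use p5 in auto)
    have "(2 - 8 / real p) * opt_awake p ?B \<le> (2 - 8 / real p) * 1"
      by (rule mult_left_mono[OF op co])
    also have "\<dots> \<le> 2 - 4 / real p" using pp by (simp add: field_simps)
    finally show ?thesis using aw p5 by (intro exI[of _ "real p"]) auto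
  next
    case False
    then have sl: "s < 1 - 4 / real p" by simp
    have das: "da s \<le> real p * s" unfolding da_def by (rule done_le_pt[OF FB al(1) s0])
    define x where "x = min (real p) (max 1 (da s + 1))"
    have x1: "1 \<le> x" "x \<le> real p" using p5 by (auto simp: x_def)
    have xgt: "da s < x" using das sl pp by (auto simp: x_def field_simps)
    have ps0: "0 \<le> real p * s" using s0 by simp
    have "x \<le> max 1 (da s + 1)" by (simp add: x_def)
    also have "\<dots> \<le> real p * s + 1" using das ps0 by simp
    finally have xle: "x \<le> real p * s + 1" .
    define xw where "xw = (if a = 0 then x else 1)"
    define yw where "yw = (if a = 0 then 1 else x)"
    let ?W = "mk xw yw"
    have VW: "valid_instance p ?W" using x1 p5 by (intro mk_valid) (auto simp: xw_def yw_def)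
    have FW: "feasible p ?W (A ?W)" by (rule feas[OF A VW])
    have pwa: "par_work (?W ! a) = x" using ab by (auto simp: xw_def yw_def mk_simps less_2_cases_iff)
    have arW: "\<And>i. i < 2 \<Longrightarrow> arrival (?W ! i) = 0" by (simp add: mk_simps)
    have lW: "length ?W = 2" by (simp add: mk_simps)
    have pdB: "\<not> par_done ?B (A ?B) i u" if i: "i < 2" "u < 1" for i u
    proof
      assume pd: "par_done ?B (A ?B) i u"
      then have "choice (A ?B) i" "completion ?B (A ?B) i \<le> u" using pd_imp by blast+
      then show False using iab[OF i(1)] cb cBa i(2) by auto
    qed
    have late: "\<forall>j<2. choice (A ?W) j \<longrightarrow> s < completion ?W (A ?W) j"
    proof (rule ccontr)
      assume neg: "\<not> (\<forall>j<2. choice (A ?W) j \<longrightarrow> s < completion ?W (A ?W) j)"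
      define J where "J = {j. j < 2 \<and> choice (A ?W) j \<and> completion ?W (A ?W) j \<le> s}"
      have "finite J" "J \<noteq> {}" using neg by (auto simp: J_def not_less)
      from ex_min_on[OF this, of "completion ?W (A ?W)"] obtain j0 where
        j0: "j0 \<in> J" "\<forall>j\<in>J. completion ?W (A ?W) j0 \<le> completion ?W (A ?W) j" by blast
      have j0s: "completion ?W (A ?W) j0 \<le> s" using j0 by (simp add: J_def)
      have H: "\<forall>t. 0 \<le> t \<longrightarrow> t < completion ?W (A ?W) j0 \<longrightarrow>
         (\<forall>i<2. \<forall>u\<le>t. \<not> par_done ?B (A ?B) i u \<and> \<not> par_done ?W (A ?W) i u)"
      proof (intro allI impI conjI)
        fix t u :: real and i :: nat assume "t < completion ?W (A ?W) j0" "i < 2" "u \<le> t"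
        moreover have "0 \<le> 4 / real p" using pp by simp
        ultimately have "u < 1" using j0s sl by linarith
        then show "\<not> par_done ?B (A ?B) i u" using pdB \<open>i < 2\<close> by simp
      next
        fix t u :: real and i :: nat assume t: "t < completion ?W (A ?W) j0" "i < 2" "u \<le> t"
        show "\<not> par_done ?W (A ?W) i u"
        proof
          assume "par_done ?W (A ?W) i u"
          then have "choice (A ?W) i" "completion ?W (A ?W) i \<le> u" using pd_imp by blast+
          then have "i \<in> J" using t j0s unfolding J_def by auto
          then show False using j0 t \<open>completion ?W (A ?W) i \<le> u\<close> by force
        qed
      qed
      have j02: "j0 < 2" "choice (A ?W) j0" using j0 by (auto simp: J_def)
      have chB: "choice (A ?B) j0" by (rule event_transfer(1)[OF A VB VW j02 H])
      have "par_work (?W ! j0) \<le> da (completion ?W (A ?W) j0)"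
        unfolding da_def using event_transfer(2)[OF A VB VW j02 H] chB iab[OF j02(1)] cb by auto
      moreover have "j0 = a" using chB iab[OF j02(1)] cb by auto
      moreover have "da (completion ?W (A ?W) j0) \<le> da s"
        unfolding da_def by (rule done_mono[OF FB al(1) j0s])
      ultimately show False using pwa xgt by simp
    qed
    define M where "M = Min (insert 1 (completion ?W (A ?W) ` {j. j < 2 \<and> choice (A ?W) j}))"
    have "0 \<le> 4 / real p" using pp by simp
    then have s1: "s < 1" using sl by linarith
    have sM: "s < M" unfolding M_def using late s1 by (auto simp: Min_gr_iff)
    have M1: "M \<le> 1" unfolding M_def by simp
    have MW: "\<And>j. j < 2 \<Longrightarrow> choice (A ?W) j \<Longrightarrow> M \<le> completion ?W (A ?W) j"
      unfolding M_def by simp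
    have "Inf X < M" using sM s_def by simp
    then obtain t1 where t1: "t1 \<in> X" "t1 < M" using cInf_less_iff[OF ne bdd] by blast
    have t1s: "s \<le> t1" unfolding s_def by (rule cInf_lower[OF t1(1) bdd])
    have t10: "0 \<le> t1" using Xpos[OF t1(1)] by simp
    have H1: "\<forall>i<2. \<forall>u\<le>t1. \<not> par_done ?B (A ?B) i u \<and> \<not> par_done ?W (A ?W) i u"
    proof (intro allI impI conjI)
      fix u :: real and i :: nat assume "i < 2" "u \<le> t1"
      then show "\<not> par_done ?B (A ?B) i u" using pdB t1(2) M1 by simp
    next
      fix u :: real and i :: nat assume iu: "i < 2" "u \<le> t1"
      show "\<not> par_done ?W (A ?W) i u"
      proof
        assume "par_done ?W (A ?W) i u"
        then have "choice (A ?W) i" "completion ?W (A ?W) i \<le> u" using pd_imp by blast+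
        then show False using MW[OF iu(1)] iu t1(2) by force
      qed
    qed
    have agb: "\<forall>u\<le>t1. alloc (A ?B) b u = alloc (A ?W) b u"
      by (rule agree(1)[OF A VB VW t10 H1 ab(2)])
    have "choice (A ?B) b = choice (A ?W) b"
      by (rule agree(2)[OF A VB VW t10 H1 ab(2)]) (use t1(1) in \<open>simp add: X_def db_def\<close>)
    then have cWb: "\<not> choice (A ?W) b" using cb by simp
    have dWs: "done_by (A ?W) b s = 0"
      using done_cong[OF agb t1s] dbs by (simp add: db_def)
    have "s + 1 \<le> completion ?W (A ?W) b"
      by (rule serial_late[OF FW VW _ _ cWb _ s0 dWs]) (use ab in \<open>auto simp: mk_simps\<close>)
    moreover have "completion ?W (A ?W) b \<le> awake_time ?W (A ?W)"
    proof -
      have "0 \<le> completion ?W (A ?W) 0" "0 \<le> completion ?W (A ?W) 1"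
        by (rule completion_props(1)[OF FW _ _ VW]; simp add: mk_simps)+
      then show ?thesis using awake_mk[of xw yw "A ?W"] ab by (auto simp: less_2_cases_iff)
    qed
    ultimately have aw: "s + 1 \<le> awake_time ?W (A ?W)" by simp
    have xy: "xw + yw = x + 1" by (simp add: xw_def yw_def)
    have op: "opt_awake p ?W \<le> (x + 1) / real p"
    proof (rule opt_le[OF VW, of _ "real p * xw / (x + 1)" "real p * yw / (x + 1)" True True])
      show "0 < (x + 1) / real p" using x1 pp by simp
      show "0 < real p * xw / (x + 1)" using x1 pp by (simp add: xw_def)
      show "0 < real p * yw / (x + 1)" using x1 pp by (simp add: yw_def)
      have "real p * xw / (x + 1) + real p * yw / (x + 1) = real p * (xw + yw) / (x + 1)"
        by (simp add: add_divide_distrib distrib_left)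
      then show "real p * xw / (x + 1) + real p * yw / (x + 1) \<le> real p" using xy x1 by simp
      show "real p * xw / (x + 1) * ((x + 1) / real p) = (if True then xw else 1)" using x1 pp by simp
      show "real p * yw / (x + 1) * ((x + 1) / real p) = (if True then yw else 1)" using x1 pp by simp
    qed simp_all
    have "(2 - 8 / real p) * opt_awake p ?W \<le> (2 - 8 / real p) * ((x + 1) / real p)"
      by (rule mult_left_mono[OF op co])
    also have "\<dots> \<le> 2 * ((x + 1) / real p)" by (rule mult_right_mono) (use x1 pp in auto)
    also have "\<dots> \<le> 2 * ((real p * s + 2) / real p)" using xle pp by (simp add: divide_right_mono)
    also have "\<dots> = 2 * s + 4 / real p" using pp by (simp add: field_simps)
    also have "\<dots> \<le> s + 1" using sl by simp
    finally have "(2 - 8 / real p) * opt_awake p ?W \<le> awake_time ?W (A ?W)" using aw by simp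
    moreover have "1 \<le> xw" "xw \<le> real p" "1 \<le> yw" "yw \<le> real p"
      using x1 p5 by (auto simp: xw_def yw_def)
    ultimately show ?thesis by blast
  qed
qed

theorem proposition8p4:
  shows "\<exists>C::real. \<forall>p::nat. \<forall>A. 1 \<le> p \<longrightarrow> oblivious_scheduler p A \<longrightarrow>
     (\<exists>I. valid_instance p I \<and> I \<noteq> [] \<and> (\<forall>tau\<in>set I. arrival tau = 0) \<and>
          (2 - C / real p) * opt_awake p I \<le> awake_time I (A I))"
proof (intro exI[of _ 8] allI impI)
  fix p :: nat and A assume p1: "1 \<le> p" and A: "oblivious_scheduler p A"
  have good: "\<exists>I. valid_instance p I \<and> I \<noteq> [] \<and> (\<forall>tau\<in>set I. arrival tau = 0) \<and>
          (2 - 8 / real p) * opt_awake p I \<le> awake_time I (A I)"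
    if "1 \<le> x" "x \<le> real p" "1 \<le> y" "y \<le> real p"
       "(2 - 8 / real p) * opt_awake p (mk x y) \<le> awake_time (mk x y) (A (mk x y))" for x y
    using that mk_valid[of x p y] mk_arr[of x y] mk_simps(2)[of x y] by blast
  show "\<exists>I. valid_instance p I \<and> I \<noteq> [] \<and> (\<forall>tau\<in>set I. arrival tau = 0) \<and>
          (2 - 8 / real p) * opt_awake p I \<le> awake_time I (A I)"
  proof (cases "real p < 5")
    case True
    have V: "valid_instance p (mk 1 1)" using p1 by (intro mk_valid) auto
    have c: "2 - 8 / real p \<le> 0" using True p1 by (simp add: field_simps)
    have "(2 - 8 / real p) * opt_awake p (mk 1 1) \<le> 0"
      using c opt_nonneg[OF A V] by (simp add: mult_nonpos_nonneg)
    also have "0 \<le> awake_time (mk 1 1) (A (mk 1 1))" by (rule awake_nonneg)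
    finally show ?thesis using good[of 1 1] p1 by simp
  next
    case False
    then have p5: "5 \<le> real p" by simp
    consider "choice (A (mk (real p) (real p))) 0" "choice (A (mk (real p) (real p))) 1"
      | "\<not> choice (A (mk (real p) (real p))) 0" "\<not> choice (A (mk (real p) (real p))) 1"
      | "choice (A (mk (real p) (real p))) 0" "\<not> choice (A (mk (real p) (real p))) 1"
      | "\<not> choice (A (mk (real p) (real p))) 0" "choice (A (mk (real p) (real p))) 1" by blast
    then show ?thesis
    proof cases
      case 1 then show ?thesis using casePP[OF A p5] good[of "real p" "real p"] p5 by simp
    next
      case 2 then show ?thesis using caseSS[OF A p5] good[of 1 1] p5 by simp
    next
      case 3 then show ?thesis using caseMixed[OF A p5, of 0 1] good by auto
    next
      case 4 then show ?thesis using caseMixed[OF A p5, of 1 0] good by auto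
    qed
  qed
qed

end
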